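(* Let $0<a<1$ and let $(\mathbf X_j)$ be the persistent random walk on $\mathbb Z$ with persistence parameter $a$ started at $0$; let $\mathbf L:=\inf\{j\ge1:\mathbf X_j=0\}$ and $\mathbf R,\mathbf V$ the numbers of runs and short runs of the excursion path $\mathbf X_0,\dots,\mathbf X_{\mathbf L}$. Let $K:=E\{r^{\mathbf R}y^{\mathbf V}z^{\mathbf L}\}$ and $\alpha_a:=\sqrt{\beta_a^2-4x_a}$, the square root taken as the formal power series in $z$ (with coefficients polynomial in $r,y$) having value $1$ at $z=0$. Then $$K=\frac{1-\frac12\beta_a-\frac12\alpha_a}{1-a},$$ and $K=\lim_{N\to\infty}E\{r^{\mathbf R}y^{\mathbf V}z^{\mathbf L}\mid \mathbf H\le N\}$, where $\mathbf H:=\max_{1\le j\le\mathbf L}|\mathbf X_j|$.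
   Context: Persistent random walk with parameter $a$: increments $\varepsilon_j\in\{\pm1\}$, $P(\varepsilon_1=\pm1)=\frac12$, and for $j\ge1$ the next increment equals the previous one with probability $a$ and is reversed with probability $1-a$. A run is a maximal block of consecutive steps all $+1$ or all $-1$; a short run is a run of one step. $\tau_a:=1+(1-a)^2r^2z^2y(1-y)$, $x_a:=a^2z^2\tau_a^2$, $\beta_a:=1+z^2\big(a^2-(1-a)^2r^2(y^2+a^2(1-y)^2z^2)\big)$. The limit is coefficientwise in the power series in $z$. *)

theory Defs
  imports "HOL-Analysis.Analysis" "HOL-Computational_Algebra.Formal_Power_Series"
begin

text \<open>Paths of the persistent random walk are encoded by their list of increments
  eps_1, ..., eps_n (True = +1, False = -1).\<close>

definition stepv :: "bool \<Rightarrow> int" where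
  "stepv b = (if b then 1 else -1)"

definition pos :: "bool list \<Rightarrow> nat \<Rightarrow> int" where
  "pos es j = (\<Sum>i<j. stepv (es ! i))"

text \<open>Probability that the first length(es) increments equal es:
  1/2 for the first one, then a factor a for each repetition and 1-a for each reversal.\<close>
definition path_prob :: "real \<Rightarrow> bool list \<Rightarrow> real" where
  "path_prob a es = (if es = [] then 1 else
     (1/2) * (\<Prod>i\<in>{i. Suc i < length es}. if es ! i = es ! Suc i then a else 1 - a))"

definition excursion :: "bool list \<Rightarrow> bool" where
  "excursion es \<longleftrightarrow> length es \<ge> 1 \<and> pos es (length es) = 0 \<and>
     (\<forall>j. 1 \<le> j \<and> j < length es \<longrightarrow> pos es j \<noteq> 0)"

definition num_runs :: "bool list \<Rightarrow> nat" where
  "num_runs es = (if es = [] then 0 else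
     Suc (card {i. Suc i < length es \<and> es ! i \<noteq> es ! Suc i}))"

text \<open>Number of short runs (runs consisting of a single step).\<close>
definition num_short_runs :: "bool list \<Rightarrow> nat" where
  "num_short_runs es = card {i. i < length es \<and>
      (i = 0 \<or> es ! (i - 1) \<noteq> es ! i) \<and>
      (Suc i = length es \<or> es ! Suc i \<noteq> es ! i)}"

definition height :: "bool list \<Rightarrow> int" where
  "height es = Max ((\<lambda>j. \<bar>pos es j\<bar>) ` {1..length es})"

text \<open>n-th coefficient (in z) of K = E{r^R y^V z^L}: E{r^R y^V ; L = n}.\<close>
definition K_coeff :: "real \<Rightarrow> real \<Rightarrow> real \<Rightarrow> nat \<Rightarrow> real" where
  "K_coeff a r y n = (\<Sum>es\<in>{es. length es = n \<and> excursion es}.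
      path_prob a es * r ^ num_runs es * y ^ num_short_runs es)"

definition K_fps :: "real \<Rightarrow> real \<Rightarrow> real \<Rightarrow> real fps" where
  "K_fps a r y = Abs_fps (K_coeff a r y)"

text \<open>Exact probability P(H <= N): by continuity from above, the limit of the
  probabilities of the events max_{1<=j<=min(n,L)} |X_j| <= N, which only depend on
  the first n increments.\<close>
definition bounded_upto :: "int \<Rightarrow> bool list \<Rightarrow> bool" where
  "bounded_upto N es \<longleftrightarrow> (\<forall>j. 1 \<le> j \<and> j \<le> length es \<and>
      (\<forall>i. 1 \<le> i \<and> i < j \<longrightarrow> pos es i \<noteq> 0) \<longrightarrow> \<bar>pos es j\<bar> \<le> N)"

definition prob_H_le :: "real \<Rightarrow> nat \<Rightarrow> real" where
  "prob_H_le a N = lim (\<lambda>n. \<Sum>es\<in>{es. length es = n \<and> bounded_upto (int N) es}. path_prob a es)"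

definition cond_coeff :: "real \<Rightarrow> real \<Rightarrow> real \<Rightarrow> nat \<Rightarrow> nat \<Rightarrow> real" where
  "cond_coeff a r y N n = (\<Sum>es\<in>{es. length es = n \<and> excursion es \<and> height es \<le> int N}.
      path_prob a es * r ^ num_runs es * y ^ num_short_runs es) / prob_H_le a N"

definition tau_fps :: "real \<Rightarrow> real \<Rightarrow> real \<Rightarrow> real fps" where
  "tau_fps a r y = 1 + fps_const ((1 - a)^2 * r^2 * y * (1 - y)) * fps_X^2"

definition x_fps :: "real \<Rightarrow> real \<Rightarrow> real \<Rightarrow> real fps" where
  "x_fps a r y = fps_const (a^2) * fps_X^2 * (tau_fps a r y)^2"

definition beta_fps :: "real \<Rightarrow> real \<Rightarrow> real \<Rightarrow> real fps" where
  "beta_fps a r y = 1 + fps_X^2 * (fps_const (a^2) - fps_const ((1 - a)^2 * r^2) *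
      (fps_const (y^2) + fps_const (a^2 * (1 - y)^2) * fps_X^2))"

text \<open>alpha_a = sqrt(beta_a^2 - 4 x_a), the square root with constant term 1.\<close>
definition alpha_fps :: "real \<Rightarrow> real \<Rightarrow> real \<Rightarrow> real fps" where
  "alpha_fps a r y = fps_radical (\<lambda>_ _. 1) 2 ((beta_fps a r y)^2 - 4 * x_fps a r y)"

end

theory Submission
  imports Defs
begin


definition shortB :: "bool \<Rightarrow> bool \<Rightarrow> bool list \<Rightarrow> nat" where
 "shortB lb rb es = card {i. i < length es \<and> (if i = 0 then lb else es!(i-1) \<noteq> es!i) \<and>
     (if Suc i = length es then rb else es!Suc i \<noteq> es!i)}"

lemma num_short_runs_shortB: "num_short_runs es = shortB True True es"
  unfolding num_short_runs_def shortB_def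
  by (rule arg_cong[where f=card]) auto

lemma card_Suc_split:
  "card {i. i < Suc n \<and> C i} = (if C 0 then 1 else 0) + card {i. i < n \<and> C (Suc i)}"
proof -
  have eq: "{i. i < Suc n \<and> C i} = {i::nat. i = 0 \<and> C 0} \<union> Suc ` {i. i < n \<and> C (Suc i)}"
    by (auto simp: image_iff less_Suc_eq_0_disj)
  have "card ({i::nat. i = 0 \<and> C 0} \<union> Suc ` {i. i < n \<and> C (Suc i)}) =
        card {i::nat. i = 0 \<and> C 0} + card (Suc ` {i. i < n \<and> C (Suc i)})"
    by (rule card_Un_disjoint) (auto intro: finite_imageI)
  also have "card (Suc ` {i. i < n \<and> C (Suc i)}) = card {i. i < n \<and> C (Suc i)}"
    by (rule card_image) auto
  also have "card {i::nat. i = 0 \<and> C 0} = (if C 0 then 1 else 0)" by auto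
  finally show ?thesis using eq by simp
qed

lemma shortB_Cons:
  assumes "es \<noteq> []"
  shows "shortB lb rb (x # es) = (if lb \<and> hd es \<noteq> x then 1 else 0) + shortB (hd es \<noteq> x) rb es"
proof -
  obtain n where n: "length es = Suc n" using assms by (cases es) auto
  have "shortB lb rb (x # es) = card {i. i < Suc (Suc n) \<and> (if i = 0 then lb else (x # es)!(i-1) \<noteq> (x # es)!i) \<and>
     (if Suc i = Suc (Suc n) then rb else (x # es)!Suc i \<noteq> (x # es)!i)}"
    unfolding shortB_def using n by simp
  also have "\<dots> = (if lb \<and> hd es \<noteq> x then 1 else 0) + card {i. i < Suc n \<and> (if Suc i = 0 then lb else (x # es)!(Suc i-1) \<noteq> (x # es)!Suc i) \<and>
     (if Suc (Suc i) = Suc (Suc n) then rb else (x # es)!Suc (Suc i) \<noteq> (x # es)!Suc i)}"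
    by (subst card_Suc_split) (simp add: hd_conv_nth assms)
  also have "{i. i < Suc n \<and> (if Suc i = 0 then lb else (x # es)!(Suc i-1) \<noteq> (x # es)!Suc i) \<and>
     (if Suc (Suc i) = Suc (Suc n) then rb else (x # es)!Suc (Suc i) \<noteq> (x # es)!Suc i)}
     = {i. i < length es \<and> (if i = 0 then hd es \<noteq> x else es!(i-1) \<noteq> es!i) \<and>
     (if Suc i = length es then rb else es!Suc i \<noteq> es!i)}"
    apply (rule Collect_cong) subgoal for i using n assms by (cases i) (auto simp: hd_conv_nth) done
  finally show ?thesis unfolding shortB_def .
qed

lemma shortB_single: "shortB lb rb [x] = (if lb \<and> rb then 1 else 0)"
  unfolding shortB_def by (auto simp: card_Suc_split[where n=0, simplified])

lemma num_runs_Cons: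
  assumes "es \<noteq> []"
  shows "num_runs (x # es) = num_runs es + (if x = hd es then 0 else 1)"
proof -
  obtain n where n: "length es = Suc n" using assms by (cases es) auto
  have "{i. Suc i < length (x # es) \<and> (x # es) ! i \<noteq> (x # es) ! Suc i} =
        {i. i < Suc n \<and> (x # es) ! i \<noteq> es ! i}" using n by auto
  moreover have "{i. Suc i < length es \<and> es ! i \<noteq> es ! Suc i} = {i. i < n \<and> es ! i \<noteq> es ! Suc i}"
    using n by auto
  ultimately show ?thesis using assms
    unfolding num_runs_def by (simp only: card_Suc_split[of n] length_Cons) (simp add: hd_conv_nth)
qed

lemma path_prob_Cons:
  assumes "es \<noteq> []"
  shows "path_prob a (x # es) = path_prob a es * (if x = hd es then a else 1 - a)"
proof -
  obtain n where n: "length es = Suc n" using assms by (cases es) auto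
  have s1: "{i. Suc i < length (x # es)} = {..<Suc n}" using n by auto
  have s2: "{i. Suc i < length es} = {..<n}" using n by auto
  have "(\<Prod>i<Suc n. if (x # es) ! i = (x # es) ! Suc i then a else 1 - a) =
     (if x = es ! 0 then a else 1 - a) * (\<Prod>i<n. if es ! i = es ! Suc i then a else 1 - a)"
    by (subst prod.lessThan_Suc_shift) simp
  then show ?thesis using assms
    unfolding path_prob_def s1 s2
    by (simp add: hd_conv_nth mult_ac)
qed

fun Fw :: "real \<Rightarrow> real \<Rightarrow> real \<Rightarrow> bool \<Rightarrow> bool \<Rightarrow> bool list \<Rightarrow> real" where
  "Fw a r y lb rb [] = 1"
| "Fw a r y lb rb [x] = (if lb \<and> rb then y else 1)"
| "Fw a r y lb rb (x # x' # es) = (if lb \<and> x' \<noteq> x then y else 1) *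
      (if x = x' then a else (1 - a) * r) * Fw a r y (x' \<noteq> x) rb (x' # es)"

lemma weight_Fw:
  "es \<noteq> [] \<Longrightarrow> path_prob a es * r ^ num_runs es * y ^ shortB lb rb es = (1/2) * r * Fw a r y lb rb es"
proof (induction es arbitrary: lb)
  case Nil then show ?case by simp
next
  case (Cons x es)
  show ?case
  proof (cases es)
    case Nil
    then show ?thesis
      by (simp add: path_prob_def num_runs_def shortB_single)
  next
    case (Cons x' es')
    have ne: "es \<noteq> []" using Cons by simp
    have IH: "path_prob a es * r ^ num_runs es * y ^ shortB (x' \<noteq> x) rb es = (1/2) * r * Fw a r y (x' \<noteq> x) rb es"
      using Cons.IH ne by blast
    have "path_prob a (x # es) * r ^ num_runs (x # es) * y ^ shortB lb rb (x # es)
       = (path_prob a es * r ^ num_runs es * y ^ shortB (x' \<noteq> x) rb es) *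
         ((if x = x' then a else 1 - a) * r ^ (if x = x' then 0 else 1) * y ^ (if lb \<and> x' \<noteq> x then 1 else 0))"
      using ne Cons by (simp add: path_prob_Cons num_runs_Cons shortB_Cons power_add mult_ac)
    also have "\<dots> = (1/2) * r * Fw a r y lb rb (x # es)"
      unfolding IH using Cons by auto
    finally show ?thesis .
  qed
qed

lemma Fw_append:
  "A \<noteq> [] \<Longrightarrow> B \<noteq> [] \<Longrightarrow> Fw a r y lb rb (A @ B) =
     Fw a r y lb (hd B \<noteq> last A) A * (if last A = hd B then a else (1 - a) * r) * Fw a r y (hd B \<noteq> last A) rb B"
proof (induction A arbitrary: lb)
  case Nil then show ?case by simp
next
  case (Cons x A)
  show ?case
  proof (cases A)
    case Nil
    then show ?thesis using Cons.prems by (cases B) auto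
  next
    case (Cons x' A')
    then show ?thesis using Cons.IH[of "x' \<noteq> x"] Cons.prems by (auto simp: mult_ac)
  qed
qed

lemma Fw_map_Not: "Fw a r y lb rb (map Not es) = Fw a r y lb rb es"
  by (induction a r y lb rb es rule: Fw.induct) auto



definition arch :: "bool list \<Rightarrow> bool" where
  "arch A \<longleftrightarrow> A \<noteq> [] \<and> pos A (length A) = 0 \<and> (\<forall>j. 1 \<le> j \<and> j < length A \<longrightarrow> pos A j > 0)"

definition dyck :: "bool list \<Rightarrow> bool" where
  "dyck q \<longleftrightarrow> (\<forall>j \<le> length q. pos q j \<ge> 0) \<and> pos q (length q) = 0"

lemma pos_0[simp]: "pos es 0 = 0" by (simp add: pos_def)

lemma pos_Suc: "pos es (Suc j) = pos es j + stepv (es ! j)"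
  by (simp add: pos_def)

lemma stepv_cases: "stepv b = 1 \<or> stepv b = -1" by (simp add: stepv_def)
lemma stepv_True[simp]: "stepv True = 1" and stepv_False[simp]: "stepv False = -1"
  by (simp_all add: stepv_def)
lemma stepv_Not: "stepv (\<not> b) = - stepv b" by (simp add: stepv_def)

lemma pos_append_le: "j \<le> length A \<Longrightarrow> pos (A @ B) j = pos A j"
  unfolding pos_def by (rule sum.cong) (auto simp: nth_append)

lemma pos_append_ge: "pos (A @ B) (length A + j) = pos A (length A) + pos B j"
  by (induction j) (auto simp: pos_Suc nth_append pos_append_le)

lemma pos_Cons: "pos (x # es) (Suc j) = stepv x + pos es j"
  using pos_append_ge[of "[x]" es j] by (simp add: pos_def)

lemma pos_take: "j \<le> n \<Longrightarrow> pos (take n es) j = pos es j"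
proof (cases "n \<le> length es")
  case True
  assume "j \<le> n"
  then show ?thesis unfolding pos_def using True by (intro sum.cong) auto
next
  case False then show ?thesis by simp
qed

lemma pos_map_Not: "pos (map Not es) j = - pos es j" if "j \<le> length es"
  unfolding pos_def using that by (simp add: stepv_Not sum_negf)

lemma abs_pos_le: "\<bar>pos es j\<bar> \<le> int j"
  by (induction j) (auto simp: pos_Suc stepv_def)

lemma pos_wrap: "j \<le> length q \<Longrightarrow> pos (True # q @ [False]) (Suc j) = 1 + pos q j"
  by (simp add: pos_Cons pos_append_le)

lemma pos_wrap_end: "pos (True # q @ [False]) (Suc (Suc (length q))) = 1 + pos q (length q) - 1"
  using pos_append_ge[of q "[False]" 1] by (simp add: pos_Cons pos_Suc[of "[False]"])

lemma arch_wrap: "dyck q \<Longrightarrow> arch (True # q @ [False])"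
  unfolding arch_def dyck_def
proof (intro conjI allI impI)
  assume d: "(\<forall>j\<le>length q. 0 \<le> pos q j) \<and> pos q (length q) = 0"
  show "pos (True # q @ [False]) (length (True # q @ [False])) = 0"
    using pos_wrap_end[of q] d by simp
  fix j assume j: "1 \<le> j \<and> j < length (True # q @ [False])"
  then obtain j' where j': "j = Suc j'" "j' \<le> length q" by (cases j) auto
  moreover have "0 \<le> pos q j'" using d j' by auto
  ultimately show "0 < pos (True # q @ [False]) j" using pos_wrap[of j' q] by simp
qed simp

lemma arch_length: assumes "arch A" shows "length A \<ge> 2" "A ! 0 = True"
proof -
  have ne: "A \<noteq> []" and z: "pos A (length A) = 0" and p: "\<And>j. 1 \<le> j \<Longrightarrow> j < length A \<Longrightarrow> pos A j > 0"
    using assms unfolding arch_def by auto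
  show l2: "length A \<ge> 2"
  proof (rule ccontr)
    assume "\<not> 2 \<le> length A"
    moreover have "length A \<noteq> 0" using ne by simp
    ultimately have "length A = 1" by linarith
    then show False using z pos_Suc[of A 0] by (simp add: stepv_def split: if_splits)
  qed
  have "pos A 1 > 0" using p[of 1] l2 by simp
  then show "A ! 0 = True" using pos_Suc[of A 0] by (simp add: stepv_def split: if_splits)
qed

lemma arch_unwrap:
  assumes "arch A" shows "\<exists>q. A = True # q @ [False] \<and> dyck q"
proof -
  have ne: "A \<noteq> []" and z: "pos A (length A) = 0" and p: "\<And>j. 1 \<le> j \<Longrightarrow> j < length A \<Longrightarrow> pos A j > 0"
    using assms unfolding arch_def by auto
  have l2: "length A \<ge> 2" and h: "A ! 0 = True" using arch_length[OF assms] by auto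
  obtain m where m: "length A = Suc (Suc m)" using l2 by (metis add_2_eq_Suc le_Suc_ex)
  have pm: "pos A (Suc m) > 0" using p[of "Suc m"] m by simp
  have "pos A (Suc (Suc m)) = pos A (Suc m) + stepv (A ! Suc m)" by (rule pos_Suc)
  then have lastF: "A ! Suc m = False" and pm1: "pos A (Suc m) = 1"
    using z m pm by (auto simp: stepv_def split: if_splits)
  define q where "q = take m (tl A)"
  have lq: "length q = m" using m by (simp add: q_def)
  have Aeq: "A = True # q @ [False]"
  proof (rule nth_equalityI)
    show "length A = length (True # q @ [False])" using m lq by simp
    fix i assume "i < length A"
    then show "A ! i = (True # q @ [False]) ! i"
      using m h lastF lq
      by (cases i) (auto simp: q_def nth_append nth_tl less_Suc_eq)
  qed
  have "dyck q"
    unfolding dyck_def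
  proof (intro conjI allI impI)
    fix j assume j: "j \<le> length q"
    have "pos A (Suc j) > 0" using p[of "Suc j"] j lq m by simp
    then show "0 \<le> pos q j" using pos_wrap[OF j] Aeq by simp
  next
    show "pos q (length q) = 0" using pos_wrap[of m q] pm1 Aeq lq by simp
  qed
  then show ?thesis using Aeq by blast
qed

lemma arch_iff_wrap: "arch A \<longleftrightarrow> (\<exists>q. A = True # q @ [False] \<and> dyck q)"
  using arch_unwrap arch_wrap by blast

lemma excursion_pos_pos:
  assumes "excursion es" "es ! 0 = True" "1 \<le> j" "j < length es"
  shows "pos es j > 0"
  using assms(3,4)
proof (induction j rule: dec_induct)
  case base then show ?case using pos_Suc[of es 0] assms(2) by simp
next
  case (step k)
  have "pos es (Suc k) \<noteq> 0" using assms(1) step unfolding excursion_def by auto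
  moreover have "pos es (Suc k) \<ge> pos es k - 1" using pos_Suc[of es k] stepv_cases[of "es ! k"] by auto
  ultimately show ?case using step by auto
qed

lemma arch_iff_excursion: "arch es \<longleftrightarrow> excursion es \<and> es ! 0 = True"
proof
  assume a: "arch es"
  then show "excursion es \<and> es ! 0 = True"
    using arch_length[OF a] unfolding arch_def excursion_def by auto
next
  assume e: "excursion es \<and> es ! 0 = True"
  then show "arch es" unfolding arch_def using excursion_pos_pos[of es] e
    unfolding excursion_def by auto
qed

lemma excursion_map_Not: "excursion (map Not es) \<longleftrightarrow> excursion es"
  unfolding excursion_def by (auto simp: pos_map_Not)

lemma dyck_hd_last: assumes "dyck q" "q \<noteq> []" shows "hd q = True" "last q = False"
proof -
  have nn: "\<And>j. j \<le> length q \<Longrightarrow> pos q j \<ge> 0" and z: "pos q (length q) = 0"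
    using assms unfolding dyck_def by auto
  have "pos q 1 \<ge> 0" using nn[of 1] assms(2) by (cases q) auto
  then show "hd q = True" using pos_Suc[of q 0] assms(2) by (auto simp: hd_conv_nth stepv_def split: if_splits)
  obtain m where m: "length q = Suc m" using assms(2) by (cases q) auto
  have "pos q m \<ge> 0" using nn[of m] m by simp
  then show "last q = False" using pos_Suc[of q m] z m assms(2)
    by (auto simp: last_conv_nth stepv_def split: if_splits)
qed

lemma arch_hd_last: assumes "arch A" shows "hd A = True" "last A = False" "A \<noteq> []"
  using arch_unwrap[OF assms] by auto

lemma arch_nonneg: assumes "arch A" "j \<le> length A" shows "pos A j \<ge> 0"
proof -
  consider "j = 0" | "j = length A" | "1 \<le> j \<and> j < length A" using assms(2) by linarith
  then show ?thesis using assms(1) unfolding arch_def by cases auto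
qed

lemma arch_dyck: "arch A \<Longrightarrow> dyck A"
  unfolding dyck_def using arch_nonneg by (auto simp: arch_def)

lemma dyck_append: assumes "arch A" "dyck B" shows "dyck (A @ B)"
  unfolding dyck_def
proof (intro conjI allI impI)
  fix j assume j: "j \<le> length (A @ B)"
  show "0 \<le> pos (A @ B) j"
  proof (cases "j \<le> length A")
    case True then show ?thesis using pos_append_le arch_nonneg[OF assms(1)] by simp
  next
    case False
    then obtain k where k: "j = length A + k" by (metis le_add_diff_inverse nat_le_linear)
    then show ?thesis using pos_append_ge[of A B k] assms j unfolding arch_def dyck_def by auto
  qed
next
  show "pos (A @ B) (length (A @ B)) = 0"
    using pos_append_ge[of A B "length B"] assms unfolding arch_def dyck_def by auto
qed

lemma arch_not_append: assumes "arch A" "B \<noteq> []" shows "\<not> arch (A @ B)"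
proof
  assume "arch (A @ B)"
  moreover have "pos (A @ B) (length A) = 0" using pos_append_le[of "length A" A B] assms(1) by (simp add: arch_def)
  moreover have "1 \<le> length A" using assms(1) by (simp add: arch_def Suc_le_eq)
  ultimately show False using assms(2) unfolding arch_def by fastforce
qed

lemma arch_prefix_unique:
  assumes "arch A1" "arch A2" "A1 @ B1 = A2 @ B2" shows "A1 = A2"
proof -
  have "\<not> length A1 < length A2" if a1: "arch A1" and a2: "arch A2" and e: "A1 @ B1 = A2 @ B2" for A1 A2 B1 B2
  proof
    assume lt: "length A1 < length A2"
    have "A1 = take (length A1) A2" using e lt by (simp add: append_eq_append_conv_if)
    then have C: "A2 = A1 @ drop (length A1) A2" by (metis append_take_drop_id)
    have "drop (length A1) A2 \<noteq> []" using lt by auto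
    then show False using arch_not_append[OF a1] a2 C by metis
  qed
  then have "length A1 = length A2" using assms by (metis linorder_neqE_nat)
  then show ?thesis using assms(3) by (metis append_eq_append_conv)
qed

lemma dyck_decomp:
  assumes "dyck q" "q \<noteq> []" shows "\<exists>A B. q = A @ B \<and> arch A \<and> dyck B"
proof -
  have nn: "\<And>j. j \<le> length q \<Longrightarrow> pos q j \<ge> 0" and z: "pos q (length q) = 0"
    using assms unfolding dyck_def by auto
  define k where "k = (LEAST k. 1 \<le> k \<and> pos q k = 0)"
  have ex: "1 \<le> length q \<and> pos q (length q) = 0" using z assms(2) by (cases q) auto
  have k1: "1 \<le> k" and kz: "pos q k = 0" using LeastI[of "\<lambda>k. 1 \<le> k \<and> pos q k = 0", OF ex] by (auto simp: k_def)
  have kl: "k \<le> length q" using Least_le[of "\<lambda>k. 1 \<le> k \<and> pos q k = 0", OF ex] by (simp add: k_def)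
  have nz: "\<And>j. 1 \<le> j \<Longrightarrow> j < k \<Longrightarrow> pos q j \<noteq> 0"
    using not_less_Least[of _ "\<lambda>k. 1 \<le> k \<and> pos q k = 0"] by (auto simp: k_def)
  define A where "A = take k q"
  define B where "B = drop k q"
  have lA: "length A = k" using kl by (simp add: A_def)
  have "arch A" unfolding arch_def
  proof (intro conjI allI impI)
    show "A \<noteq> []" using lA k1 by auto
    show "pos A (length A) = 0" using lA kz by (simp add: A_def pos_take)
    fix j assume j: "1 \<le> j \<and> j < length A"
    then show "0 < pos A j" using nz[of j] nn[of j] lA kl by (simp add: A_def pos_take)
  qed
  moreover have "dyck B" unfolding dyck_def
  proof (intro conjI allI impI)
    fix j assume j: "j \<le> length B"
    have "pos q (k + j) = pos A k + pos B j" using pos_append_ge[of A B j] lA by (simp add: A_def B_def)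
    then show "0 \<le> pos B j" using nn[of "k+j"] j kl lA kz by (simp add: A_def B_def pos_take)
  next
    have "pos q (k + length B) = pos A k + pos B (length B)" using pos_append_ge[of A B "length B"] lA by (simp add: A_def B_def)
    then show "pos B (length B) = 0" using z kl kz by (simp add: A_def B_def pos_take)
  qed
  moreover have "q = A @ B" by (simp add: A_def B_def)
  ultimately show ?thesis by blast
qed



lemma finite_len: "finite {xs::bool list. length xs = n \<and> P xs}"
proof -
  have "finite {xs::bool list. set xs \<subseteq> UNIV \<and> length xs = n}" by (rule finite_lists_length_eq) simp
  then show ?thesis by (rule finite_subset[rotated]) auto
qed

lemma sum_concat:
  fixes g :: "bool list \<Rightarrow> 'b::comm_monoid_add"
  assumes R: "\<And>xs. R xs \<longleftrightarrow> (\<exists>A B. xs = A @ B \<and> P A \<and> Q B)"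
    and U: "\<And>A1 B1 A2 B2. P A1 \<Longrightarrow> P A2 \<Longrightarrow> A1 @ B1 = A2 @ B2 \<Longrightarrow> A1 = A2"
  shows "(\<Sum>xs\<in>{xs. length xs = n \<and> R xs}. g xs) =
    (\<Sum>i\<le>n. \<Sum>A\<in>{A. length A = i \<and> P A}. \<Sum>B\<in>{B. length B = n - i \<and> Q B}. g (A @ B))"
proof -
  define S where "S = (\<lambda>i. {A. length A = i \<and> P A} \<times> {B. length B = n - i \<and> Q B})"
  have "(\<Sum>i\<le>n. \<Sum>A\<in>{A. length A = i \<and> P A}. \<Sum>B\<in>{B. length B = n - i \<and> Q B}. g (A @ B))
      = (\<Sum>i\<le>n. \<Sum>p\<in>S i. (\<lambda>(A, B). g (A @ B)) p)"
    unfolding S_def by (simp add: sum.cartesian_product)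
  also have "\<dots> = (\<Sum>p\<in>(\<Union>i\<le>n. S i). (\<lambda>(A, B). g (A @ B)) p)"
    by (rule sum.UNION_disjoint[symmetric]) (auto simp: S_def finite_len)
  also have "\<dots> = (\<Sum>p\<in>(\<Union>i\<le>n. S i). g ((\<lambda>(A, B). A @ B) p))"
    by (simp add: split_def)
  also have "\<dots> = (\<Sum>xs\<in>{xs. length xs = n \<and> R xs}. g xs)"
  proof (rule sum.reindex_bij_betw)
    show "bij_betw (\<lambda>(A, B). A @ B) (\<Union>i\<le>n. S i) {xs. length xs = n \<and> R xs}"
      unfolding bij_betw_def
    proof (intro conjI)
      show "inj_on (\<lambda>(A, B). A @ B) (\<Union>i\<le>n. S i)"
        by (auto simp: inj_on_def S_def dest: U)
      show "(\<lambda>(A, B). A @ B) ` (\<Union>i\<le>n. S i) = {xs. length xs = n \<and> R xs}"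
      proof (intro equalityI subsetI)
        fix xs assume "xs \<in> (\<lambda>(A, B). A @ B) ` (\<Union>i\<le>n. S i)"
        then show "xs \<in> {xs. length xs = n \<and> R xs}" using R by (auto simp: S_def)
      next
        fix xs assume "xs \<in> {xs. length xs = n \<and> R xs}"
        then obtain A B where "xs = A @ B" "P A" "Q B" "length xs = n" using R by blast
        then show "xs \<in> (\<lambda>(A, B). A @ B) ` (\<Union>i\<le>n. S i)"
          unfolding S_def by (intro image_eqI[of _ _ "(A, B)"]) auto
      qed
    qed
  qed
  finally show ?thesis by simp
qed

definition om :: "real \<Rightarrow> real \<Rightarrow> real \<Rightarrow> bool \<Rightarrow> bool \<Rightarrow> bool list \<Rightarrow> real" where
  "om a r y lb rb es = (1/2) * r * Fw a r y lb rb es"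

definition ar :: "real \<Rightarrow> real \<Rightarrow> real \<Rightarrow> bool \<Rightarrow> bool \<Rightarrow> nat \<Rightarrow> real" where
  "ar a r y lb rb n = (\<Sum>A\<in>{A. length A = n \<and> arch A}. om a r y lb rb A)"

definition dy :: "real \<Rightarrow> real \<Rightarrow> real \<Rightarrow> bool \<Rightarrow> bool \<Rightarrow> nat \<Rightarrow> real" where
  "dy a r y lb rb n = (\<Sum>q\<in>{q. length q = n \<and> dyck q \<and> q \<noteq> []}. om a r y lb rb q)"

lemma om_append_arch:
  assumes "arch A" "dyck B" "B \<noteq> []"
  shows "om a r y lb rb (A @ B) = 2 * (1 - a) * om a r y lb True A * om a r y True rb B"
proof -
  have "last A = False" "A \<noteq> []" using arch_hd_last[OF assms(1)] by auto
  moreover have "hd B = True" using dyck_hd_last[OF assms(2,3)] by simp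
  ultimately show ?thesis using Fw_append[of A B a r y lb rb] assms(3) by (simp add: om_def)
qed

lemma dy_eq: "dy a r y lb rb n = ar a r y lb rb n +
   2 * (1 - a) * (\<Sum>i\<le>n. ar a r y lb True i * dy a r y True rb (n - i))"
proof -
  have split: "{q. length q = n \<and> dyck q \<and> q \<noteq> []} =
      {q. length q = n \<and> arch q} \<union> {q. length q = n \<and> (dyck q \<and> q \<noteq> [] \<and> \<not> arch q)}"
    using arch_dyck by (auto simp: arch_def)
  have "dy a r y lb rb n = ar a r y lb rb n +
     (\<Sum>q\<in>{q. length q = n \<and> (dyck q \<and> q \<noteq> [] \<and> \<not> arch q)}. om a r y lb rb q)"
    unfolding dy_def ar_def split by (rule sum.union_disjoint) (auto simp: finite_len)
  also have "(\<Sum>q\<in>{q. length q = n \<and> (dyck q \<and> q \<noteq> [] \<and> \<not> arch q)}. om a r y lb rb q) =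
    (\<Sum>i\<le>n. \<Sum>A\<in>{A. length A = i \<and> arch A}. \<Sum>B\<in>{B. length B = n - i \<and> (dyck B \<and> B \<noteq> [])}. om a r y lb rb (A @ B))"
  proof (rule sum_concat)
    fix xs
    show "(dyck xs \<and> xs \<noteq> [] \<and> \<not> arch xs) \<longleftrightarrow> (\<exists>A B. xs = A @ B \<and> arch A \<and> (dyck B \<and> B \<noteq> []))"
    proof
      assume h: "dyck xs \<and> xs \<noteq> [] \<and> \<not> arch xs"
      then obtain A B where "xs = A @ B" "arch A" "dyck B" using dyck_decomp by blast
      moreover have "B \<noteq> []" using h calculation by auto
      ultimately show "\<exists>A B. xs = A @ B \<and> arch A \<and> (dyck B \<and> B \<noteq> [])" by blast
    next
      assume "\<exists>A B. xs = A @ B \<and> arch A \<and> (dyck B \<and> B \<noteq> [])"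
      then obtain A B where "xs = A @ B" "arch A" "dyck B" "B \<noteq> []" by blast
      then show "dyck xs \<and> xs \<noteq> [] \<and> \<not> arch xs"
        using dyck_append arch_not_append by simp
    qed
  qed (rule arch_prefix_unique)
  also have "\<dots> = (\<Sum>i\<le>n. 2 * (1 - a) * (ar a r y lb True i * dy a r y True rb (n - i)))"
  proof (intro sum.cong refl)
    fix i
    have "(\<Sum>A\<in>{A. length A = i \<and> arch A}. \<Sum>B\<in>{B. length B = n - i \<and> (dyck B \<and> B \<noteq> [])}. om a r y lb rb (A @ B))
      = (\<Sum>A\<in>{A. length A = i \<and> arch A}. \<Sum>B\<in>{B. length B = n - i \<and> (dyck B \<and> B \<noteq> [])}. 2 * (1 - a) * (om a r y lb True A * om a r y True rb B))"
      by (intro sum.cong refl) (simp add: om_append_arch)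
    also have "\<dots> = 2 * (1 - a) * ((\<Sum>A\<in>{A. length A = i \<and> arch A}. om a r y lb True A) * (\<Sum>B\<in>{B. length B = n - i \<and> (dyck B \<and> B \<noteq> [])}. om a r y True rb B))"
      by (subst sum_product) (simp add: sum_distrib_left)
    finally show "(\<Sum>A\<in>{A. length A = i \<and> arch A}. \<Sum>B\<in>{B. length B = n - i \<and> (dyck B \<and> B \<noteq> [])}. om a r y lb rb (A @ B))
      = 2 * (1 - a) * (ar a r y lb True i * dy a r y True rb (n - i))"
      unfolding ar_def dy_def .
  qed
  finally show ?thesis by (simp add: sum_distrib_left)
qed

lemma dyck_Nil: "dyck []" by (simp add: dyck_def)

lemma Fw_wrap:
  assumes "dyck q" "q \<noteq> []"
  shows "Fw a r y lb rb (True # q @ [False]) = a^2 * Fw a r y False False q"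
proof -
  have h: "hd q = True" and l: "last q = False" using dyck_hd_last[OF assms] by auto
  have "Fw a r y lb rb ([True] @ (q @ [False])) = Fw a r y lb False [True] * a * Fw a r y False rb (q @ [False])"
    using Fw_append[of "[True]" "q @ [False]" a r y lb rb] h assms(2) by simp
  also have "Fw a r y False rb (q @ [False]) = Fw a r y False False q * a * Fw a r y False rb [False]"
    using Fw_append[of q "[False]" a r y False rb] l assms(2) by simp
  finally show ?thesis by (simp add: power2_eq_square)
qed

lemma ar_small: "n < 2 \<Longrightarrow> ar a r y lb rb n = 0"
  unfolding ar_def using arch_length(1) by (intro sum.neutral) fastforce

lemma ar_eq: "ar a r y lb rb (Suc (Suc m)) =
   (if m = 0 then (1/2) * (1 - a) * r^2 * (if lb then y else 1) * (if rb then y else 1) else 0)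
   + a^2 * dy a r y False False m"
proof -
  have img: "{A. length A = Suc (Suc m) \<and> arch A} = (\<lambda>q. True # q @ [False]) ` {q. length q = m \<and> dyck q}"
    using arch_iff_wrap by auto
  have "ar a r y lb rb (Suc (Suc m)) = (\<Sum>q\<in>{q. length q = m \<and> dyck q}. om a r y lb rb (True # q @ [False]))"
    unfolding ar_def img by (subst sum.reindex) (auto simp: inj_on_def)
  also have "\<dots> = (if m = 0 then (1/2) * (1 - a) * r^2 * (if lb then y else 1) * (if rb then y else 1) else 0)
   + a^2 * dy a r y False False m"
  proof (cases "m = 0")
    case True
    then have "{q. length q = m \<and> dyck q} = {[]}" using dyck_Nil by auto
    moreover have "{q. length q = m \<and> dyck q \<and> q \<noteq> []} = {}" using True by auto
    ultimately show ?thesis using True by (simp add: dy_def om_def power2_eq_square)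
  next
    case False
    then have "{q. length q = m \<and> dyck q} = {q. length q = m \<and> dyck q \<and> q \<noteq> []}" by auto
    then show ?thesis using False
      by (simp add: dy_def om_def Fw_wrap sum_distrib_left mult_ac)
  qed
  finally show ?thesis .
qed

lemma weight_om: "es \<noteq> [] \<Longrightarrow> path_prob a es * r ^ num_runs es * y ^ num_short_runs es = om a r y True True es"
  by (simp add: num_short_runs_shortB weight_Fw om_def)

lemma inj_map_Not: "inj (map Not)"
  by (rule inj_mapI) (simp add: inj_on_def)

lemma K_coeff_ar: "K_coeff a r y n = 2 * ar a r y True True n"
proof -
  have exc_ne: "excursion es \<Longrightarrow> es \<noteq> []" for es by (auto simp: excursion_def)
  have split: "{es. length es = n \<and> excursion es} = {A. length A = n \<and> arch A} \<union> map Not ` {A. length A = n \<and> arch A}"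
  proof (intro equalityI subsetI)
    fix es assume "es \<in> {es. length es = n \<and> excursion es}"
    then have e: "length es = n" "excursion es" by auto
    show "es \<in> {A. length A = n \<and> arch A} \<union> map Not ` {A. length A = n \<and> arch A}"
    proof (cases "es ! 0")
      case True
      then have "arch es" using e(2) arch_iff_excursion by blast
      then show ?thesis using e by blast
    next
      case False
      have ne: "es \<noteq> []" using exc_ne[OF e(2)] .
      have "excursion (map Not es)" using e(2) excursion_map_Not by blast
      moreover have "map Not es ! 0 = True" using False ne by (simp add: nth_map)
      ultimately have "arch (map Not es)" using arch_iff_excursion by blast
      moreover have "es = map Not (map Not es)" by (simp add: comp_def)
      moreover have "length (map Not es) = n" using e by simp
      ultimately show ?thesis by blast
    qed
  next
    fix es assume "es \<in> {A. length A = n \<and> arch A} \<union> map Not ` {A. length A = n \<and> arch A}"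
    then show "es \<in> {es. length es = n \<and> excursion es}"
    proof (elim UnE)
      assume "es \<in> {A. length A = n \<and> arch A}"
      then show ?thesis using arch_iff_excursion by blast
    next
      assume "es \<in> map Not ` {A. length A = n \<and> arch A}"
      then obtain A where A: "es = map Not A" "length A = n" "arch A" by blast
      then have "excursion A" using arch_iff_excursion by blast
      then have "excursion es" using A(1) excursion_map_Not by blast
      then show ?thesis using A by simp
    qed
  qed
  have disj: "{A. length A = n \<and> arch A} \<inter> map Not ` {A. length A = n \<and> arch A} = {}"
  proof -
    have "False" if "arch A" "arch B" "A = map Not B" for A B
    proof -
      have "A ! 0 = True" "B ! 0 = True" using arch_length that by auto
      moreover have "B \<noteq> []" using that(2) by (simp add: arch_def)
      ultimately show False using that(3) by simp
    qed
    then show ?thesis by blast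
  qed
  have "K_coeff a r y n = (\<Sum>es\<in>{es. length es = n \<and> excursion es}. om a r y True True es)"
    unfolding K_coeff_def by (intro sum.cong refl) (simp add: weight_om exc_ne)
  also have "\<dots> = ar a r y True True n + (\<Sum>es\<in>map Not ` {A. length A = n \<and> arch A}. om a r y True True es)"
    unfolding split ar_def by (rule sum.union_disjoint) (simp_all add: finite_len disj)
  also have "(\<Sum>es\<in>map Not ` {A. length A = n \<and> arch A}. om a r y True True es) = ar a r y True True n"
    unfolding ar_def
    by (subst sum.reindex) (auto intro: inj_on_subset[OF inj_map_Not] simp: om_def Fw_map_Not)
  finally show ?thesis by simp
qed



lemma ident1:
  fixes A R Y Z P :: "'a::comm_ring_1"
  shows "(1 - A)^2 * (Z^2 * (1 - A) * R^2 * Y^2 + P)^2 - (1 - A) * (2 - (1 + Z^2 * (A^2 - (1 - A)^2 * R^2 * (Y^2 + A^2 * (1 - Y)^2 * Z^2)))) * (Z^2 * (1 - A) * R^2 * Y^2 + P)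
     + 1 - (1 + Z^2 * (A^2 - (1 - A)^2 * R^2 * (Y^2 + A^2 * (1 - Y)^2 * Z^2)))
     + A^2 * Z^2 * (1 + (1 - A)^2 * R^2 * Y * (1 - Y) * Z^2)^2
     = - (1 - A) * (P * (1 - (1 - A) * (Z^2 * (1 - A) * R^2 * Y^2 + P)) - A^2 * Z^2 * ((Z^2 * (1 - A) * R^2 + P) * (1 - (1 - A) * (Z^2 * (1 - A) * R^2 * Y^2 + P)) + (1 - A) * (Z^2 * (1 - A) * R^2 * Y + P) * (Z^2 * (1 - A) * R^2 * Y + P)))"
  by (simp add: algebra_simps power2_eq_square)


lemma quad_generic:
  fixes A R Y Z K S T F E :: "'a::comm_ring_1"
  assumes hK: "K = Z^2 * ((1 - A) * R^2 * Y^2 + A^2 * S)"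
    and hT: "T = Z^2 * ((1 - A) * R^2 * Y + A^2 * S)"
    and hF: "F = Z^2 * ((1 - A) * R^2 + A^2 * S)"
    and hE: "E = T + (1 - A) * K * E"
    and hS: "S = F + (1 - A) * T * E"
  shows "(1 - A)^2 * K^2 - (1 - A) * (2 - (1 + Z^2 * (A^2 - (1 - A)^2 * R^2 * (Y^2 + A^2 * (1 - Y)^2 * Z^2)))) * K
     + 1 - (1 + Z^2 * (A^2 - (1 - A)^2 * R^2 * (Y^2 + A^2 * (1 - Y)^2 * Z^2)))
     + A^2 * Z^2 * (1 + (1 - A)^2 * R^2 * Y * (1 - Y) * Z^2)^2 = 0"
proof -
  define P where "P = A^2 * Z^2 * S"
  have s1: "(1 - (1 - A) * K) * E = T" using hE by (simp add: algebra_simps)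
  have s2: "S * (1 - (1 - A) * K) = F * (1 - (1 - A) * K) + (1 - A) * T * T"
  proof -
    have "S * (1 - (1 - A) * K) = F * (1 - (1 - A) * K) + (1 - A) * T * ((1 - (1 - A) * K) * E)"
      by (subst hS) (simp add: algebra_simps)
    then show ?thesis using s1 by simp
  qed
  have M: "P * (1 - (1 - A) * K) = A^2 * Z^2 * (F * (1 - (1 - A) * K) + (1 - A) * T * T)"
    unfolding P_def using s2 by (metis mult.assoc)
  have K': "K = Z^2 * (1 - A) * R^2 * Y^2 + P" and T': "T = Z^2 * (1 - A) * R^2 * Y + P"
    and F': "F = Z^2 * (1 - A) * R^2 + P" unfolding P_def hK hT hF by (simp_all add: algebra_simps)
  show ?thesis using ident1[of A Z R Y P] M unfolding K'[symmetric] T'[symmetric] F'[symmetric] by simp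
qed

lemma radical_ident:
  fixes C K B X :: "'a::comm_ring_1"
  assumes "C^2 * K^2 - C * (2 - B) * K + 1 - B + X = 0"
  shows "(2 - B - 2 * C * K)^2 = B^2 - 4 * X"
proof -
  have "(2 - B - 2 * C * K)^2 = B^2 - 4 * X + 4 * (C^2 * K^2 - C * (2 - B) * K + 1 - B + X)"
    by (simp add: algebra_simps power2_eq_square)
  then show ?thesis using assms by simp
qed

lemma fc_mult: "fps_const (x * y) = fps_const x * fps_const (y::real)" by simp
lemma fc_diff: "fps_const (x - y) = fps_const x - fps_const (y::real)" by simp
lemma fc_pow: "fps_const (x ^ n) = fps_const (x::real) ^ n" by simp
lemma fc_one: "fps_const (1::real) = 1" by simp

lemma ar_sym: "ar a r y False True n = ar a r y True False n"
proof (cases "n < 2")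
  case True then show ?thesis by (simp add: ar_small)
next
  case False
  then obtain m where "n = Suc (Suc m)" by (metis add_2_eq_Suc le_Suc_ex not_less)
  then show ?thesis by (simp add: ar_eq)
qed

lemma Ar_fps_eq:
  "Abs_fps (\<lambda>n. 2 * ar a r y lb rb n) = fps_X^2 * (fps_const ((1 - a) * r^2 * (if lb then y else 1) * (if rb then y else 1))
     + fps_const (a^2) * Abs_fps (\<lambda>n. 2 * dy a r y False False n))"
proof (rule fps_ext)
  fix n
  show "fps_nth (Abs_fps (\<lambda>n. 2 * ar a r y lb rb n)) n = fps_nth (fps_X^2 * (fps_const ((1 - a) * r^2 * (if lb then y else 1) * (if rb then y else 1))
     + fps_const (a^2) * Abs_fps (\<lambda>n. 2 * dy a r y False False n))) n"
  proof (cases "n < 2")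
    case True then show ?thesis by (simp add: ar_small fps_X_power_mult_nth)
  next
    case False
    then obtain m where m: "n = Suc (Suc m)" by (metis add_2_eq_Suc le_Suc_ex not_less)
    show ?thesis unfolding m fps_X_power_mult_nth by (simp add: ar_eq)
  qed
qed

lemma Dy_fps_eq:
  "Abs_fps (\<lambda>n. 2 * dy a r y lb rb n) = Abs_fps (\<lambda>n. 2 * ar a r y lb rb n)
     + fps_const (1 - a) * Abs_fps (\<lambda>n. 2 * ar a r y lb True n) * Abs_fps (\<lambda>n. 2 * dy a r y True rb n)"
proof (rule fps_ext)
  fix n
  have "fps_nth (fps_const (1 - a) * Abs_fps (\<lambda>n. 2 * ar a r y lb True n) * Abs_fps (\<lambda>n. 2 * dy a r y True rb n)) n
     = (1 - a) * (\<Sum>i=0..n. (2 * ar a r y lb True i) * (2 * dy a r y True rb (n - i)))"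
    by (subst mult.assoc, subst fps_mult_left_const_nth) (simp add: fps_mult_nth)
  also have "\<dots> = 2 * (2 * (1 - a) * (\<Sum>i\<le>n. ar a r y lb True i * dy a r y True rb (n - i)))"
    by (simp add: atLeast0AtMost sum_distrib_left) (intro sum.cong refl; simp add: algebra_simps)
  finally show "fps_nth (Abs_fps (\<lambda>n. 2 * dy a r y lb rb n)) n = fps_nth (Abs_fps (\<lambda>n. 2 * ar a r y lb rb n)
     + fps_const (1 - a) * Abs_fps (\<lambda>n. 2 * ar a r y lb True n) * Abs_fps (\<lambda>n. 2 * dy a r y True rb n)) n"
    by (simp add: dy_eq[of a r y lb rb n] algebra_simps)
qed

lemma K_fps_2ar: "K_fps a r y = Abs_fps (\<lambda>n. 2 * ar a r y True True n)"
  unfolding K_fps_def by (rule arg_cong[where f=Abs_fps]) (simp add: K_coeff_ar fun_eq_iff)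

lemma K_fps_quad:
  "(1 - fps_const a)^2 * (K_fps a r y)^2 - (1 - fps_const a) * (2 - beta_fps a r y) * K_fps a r y
     + 1 - beta_fps a r y + x_fps a r y = 0"
proof -
  define K where "K = Abs_fps (\<lambda>n. 2 * ar a r y True True n)"
  define T where "T = Abs_fps (\<lambda>n. 2 * ar a r y True False n)"
  define F where "F = Abs_fps (\<lambda>n. 2 * ar a r y False False n)"
  define S where "S = Abs_fps (\<lambda>n. 2 * dy a r y False False n)"
  define E where "E = Abs_fps (\<lambda>n. 2 * dy a r y True False n)"
  have FT: "Abs_fps (\<lambda>n. 2 * ar a r y False True n) = T" unfolding T_def by (simp add: ar_sym)
  have hK: "K = fps_X^2 * ((1 - fps_const a) * fps_const r^2 * fps_const y^2 + fps_const a^2 * S)"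
    using Ar_fps_eq[of a r y True True] unfolding K_def S_def by (simp only: fc_mult fc_diff fc_pow fc_one if_True) (simp add: power2_eq_square mult.assoc)
  have hT: "T = fps_X^2 * ((1 - fps_const a) * fps_const r^2 * fps_const y + fps_const a^2 * S)"
    using Ar_fps_eq[of a r y True False] unfolding T_def S_def by (simp only: fc_mult fc_diff fc_pow fc_one if_True if_False mult_1_right)
  have hF: "F = fps_X^2 * ((1 - fps_const a) * fps_const r^2 + fps_const a^2 * S)"
    using Ar_fps_eq[of a r y False False] unfolding F_def S_def by (simp only: fc_mult fc_diff fc_pow fc_one if_False mult_1_right)
  have hE: "E = T + (1 - fps_const a) * K * E"
    using Dy_fps_eq[of a r y True False] unfolding E_def T_def K_def by (simp only: fc_diff fc_one)
  have hS: "S = F + (1 - fps_const a) * T * E"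
    using Dy_fps_eq[of a r y False False] FT unfolding S_def F_def E_def by (simp only: fc_diff fc_one)
  have beta: "beta_fps a r y = 1 + fps_X^2 * (fps_const a^2 - (1 - fps_const a)^2 * fps_const r^2 * (fps_const y^2 + fps_const a^2 * (1 - fps_const y)^2 * fps_X^2))"
    unfolding beta_fps_def by (simp only: fc_mult fc_diff fc_pow fc_one)
  have x: "x_fps a r y = fps_const a^2 * fps_X^2 * (1 + (1 - fps_const a)^2 * fps_const r^2 * fps_const y * (1 - fps_const y) * fps_X^2)^2"
    unfolding x_fps_def tau_fps_def by (simp only: fc_mult fc_diff fc_pow fc_one)
  show ?thesis
    using quad_generic[OF hK hT hF hE hS] unfolding K_fps_2ar K_def[symmetric] beta x by (simp add: mult_ac)
qed



lemma K_coeff_0: "K_coeff a r y 0 = 0"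
proof -
  have "\<not> excursion []" by (simp add: excursion_def)
  then have "{es. length es = 0 \<and> excursion es} = {}" by auto
  then show ?thesis unfolding K_coeff_def by (simp only: sum.empty)
qed

lemma part1:
  assumes "a < 1"
  shows "K_fps a r y = fps_const (1 / (1 - a)) *
           (1 - fps_const (1/2) * beta_fps a r y - fps_const (1/2) * alpha_fps a r y)"
proof -
  define C :: "real fps" where "C = 1 - fps_const a"
  define K where "K = K_fps a r y"
  define B where "B = beta_fps a r y"
  define X where "X = x_fps a r y"
  define Al where "Al = 2 - B - 2 * C * K"
  have Q: "C^2 * K^2 - C * (2 - B) * K + 1 - B + X = 0"
    using K_fps_quad[of a r y] unfolding C_def K_def B_def X_def .
  have sq: "Al^2 = B^2 - 4 * X" unfolding Al_def by (rule radical_ident[OF Q])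
  have K0: "fps_nth K 0 = 0" unfolding K_def K_fps_def by (simp add: K_coeff_0)
  have B0: "fps_nth B 0 = 1" unfolding B_def beta_fps_def by (simp add: fps_X_power_mult_nth)
  have X0: "fps_nth X 0 = 0" unfolding X_def x_fps_def by (simp add: fps_X_power_mult_nth mult.assoc)
  have Al0: "fps_nth Al 0 = 1" unfolding Al_def using K0 B0 by (simp add: mult.assoc)
  have D0: "fps_nth (B^2 - 4 * X) 0 = 1" using B0 X0 by (simp add: power2_eq_square)
  have "(Al ^ Suc 1 = B^2 - 4 * X) = (Al = fps_radical (\<lambda>_ _. 1) (Suc 1) (B^2 - 4 * X))"
    apply (rule radical_unique)
      apply (simp only: D0 power_one)
     apply (simp only: Al0)
    apply (simp only: D0)
    done
  then have Aleq: "Al = alpha_fps a r y" using sq unfolding alpha_fps_def B_def X_def by (simp add: numeral_2_eq_2)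
  have h2: "2 * fps_const (1/2) = (1::real fps)" by (simp add: numeral_fps_const)
  have "1 - fps_const (1/2) * B - fps_const (1/2) * Al = 1 - 2 * fps_const (1/2) + (2 * fps_const (1/2)) * C * K"
    unfolding Al_def by (simp add: algebra_simps)
  also have "\<dots> = C * K" unfolding h2 by simp
  finally have e1: "1 - fps_const (1/2) * B - fps_const (1/2) * Al = C * K" .
  have Cc: "C = fps_const (1 - a)" unfolding C_def by (rule fps_ext) simp
  have "fps_const (1 / (1 - a)) * C = 1" unfolding Cc using assms by simp
  then have "fps_const (1 / (1 - a)) * (C * K) = K" by (metis mult.assoc mult_1)
  then show ?thesis using e1 Aleq unfolding K_def B_def by simp
qed



lemma path_prob_snoc:
  assumes "es \<noteq> []"
  shows "path_prob a (es @ [b]) = path_prob a es * (if last es = b then a else 1 - a)"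
proof -
  obtain m where m: "length es = Suc m" using assms by (cases es) auto
  have s1: "{i. Suc i < length (es @ [b])} = {..<Suc m}" using m by auto
  have s2: "{i. Suc i < length es} = {..<m}" using m by auto
  have "(\<Prod>i<Suc m. if (es @ [b]) ! i = (es @ [b]) ! Suc i then a else 1 - a) =
     (\<Prod>i<m. if es ! i = es ! Suc i then a else 1 - a) * (if last es = b then a else 1 - a)"
  proof -
    have "last es = es ! m" using m assms by (simp add: last_conv_nth)
    then show ?thesis using m by (simp add: nth_append)
  qed
  then show ?thesis using assms unfolding path_prob_def s1 s2 by simp
qed

lemma path_prob_snoc_sum: "path_prob a (es @ [True]) + path_prob a (es @ [False]) = path_prob a es"
proof (cases "es = []")
  case True then show ?thesis by (simp add: path_prob_def)
next
  case False then show ?thesis by (cases "last es") (simp_all add: path_prob_snoc algebra_simps)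
qed

lemma path_prob_nonneg: "0 \<le> a \<Longrightarrow> a \<le> 1 \<Longrightarrow> 0 \<le> path_prob a es"
  unfolding path_prob_def by (auto intro!: prod_nonneg)

lemma len_Suc_image: "{s::bool list. length s = Suc m \<and> P s} =
   (\<lambda>(s, b). s @ [b]) ` {(s, b). length s = m \<and> P (s @ [b])}"
proof (intro equalityI subsetI)
  fix s assume "s \<in> {s::bool list. length s = Suc m \<and> P s}"
  then have s: "length s = Suc m" "P s" by auto
  then have "s = butlast s @ [last s]" by (metis append_butlast_last_id list.size(3) nat.simps(3))
  moreover have "length (butlast s) = m" using s by simp
  ultimately show "s \<in> (\<lambda>(s, b). s @ [b]) ` {(s, b). length s = m \<and> P (s @ [b])}"
    using s by (intro image_eqI[of _ _ "(butlast s, last s)"]) auto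
qed auto

lemma sum_snoc:
  fixes g :: "bool list \<Rightarrow> real"
  shows "(\<Sum>s\<in>{s. length s = Suc m}. g s) = (\<Sum>s\<in>{s. length s = m}. g (s @ [True]) + g (s @ [False]))"
proof -
  have "(\<Sum>s\<in>{s. length s = Suc m}. g s) = (\<Sum>p\<in>{(s, b). length s = m \<and> True}. g ((\<lambda>(s, b). s @ [b]) p))"
    using len_Suc_image[of m "\<lambda>_. True"] by (simp add: sum.reindex inj_on_def case_prod_beta)
  also have "{(s, b). length s = m \<and> True} = {s. length s = m} \<times> (UNIV :: bool set)" by auto
  also have "(\<Sum>p\<in>{s. length s = m} \<times> (UNIV :: bool set). g ((\<lambda>(s, b). s @ [b]) p)) =
      (\<Sum>s\<in>{s. length s = m}. \<Sum>b\<in>UNIV. g (s @ [b]))"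
    by (simp add: sum.cartesian_product split_def)
  also have "\<dots> = (\<Sum>s\<in>{s. length s = m}. g (s @ [True]) + g (s @ [False]))"
    by (simp add: UNIV_bool add.commute)
  finally show ?thesis .
qed

lemma path_prob_ext: "(\<Sum>s\<in>{s. length s = m}. path_prob a (p @ s)) = path_prob a p"
proof (induction m)
  case 0
  have "{s::bool list. length s = 0} = {[]}" by auto
  then show ?case by simp
next
  case (Suc m)
  have "(\<Sum>s\<in>{s. length s = Suc m}. path_prob a (p @ s)) =
     (\<Sum>s\<in>{s. length s = m}. path_prob a ((p @ s) @ [True]) + path_prob a ((p @ s) @ [False]))"
    by (subst sum_snoc) simp
  also have "\<dots> = (\<Sum>s\<in>{s. length s = m}. path_prob a (p @ s))"
    by (simp only: path_prob_snoc_sum)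
  finally show ?case using Suc by simp
qed

lemma path_prob_total: "(\<Sum>s\<in>{s. length s = m}. path_prob a s) = 1"
  using path_prob_ext[where m=m and a=a and p="[]"] by (simp add: path_prob_def)

definition Xk :: "nat \<Rightarrow> nat \<Rightarrow> bool list set" where
  "Xk n k = {es. length es = n \<and> excursion (take k es)}"

lemma Xk_image: "k \<le> n \<Longrightarrow> Xk n k = (\<lambda>(p, s). p @ s) ` ({p. length p = k \<and> excursion p} \<times> {s. length s = n - k})"
proof (intro equalityI subsetI)
  fix es assume k: "k \<le> n" and "es \<in> Xk n k"
  then have es: "length es = n" "excursion (take k es)" by (auto simp: Xk_def)
  then show "es \<in> (\<lambda>(p, s). p @ s) ` ({p. length p = k \<and> excursion p} \<times> {s. length s = n - k})"
    using k by (intro image_eqI[of _ _ "(take k es, drop k es)"]) auto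
next
  fix es assume k: "k \<le> n" and "es \<in> (\<lambda>(p, s). p @ s) ` ({p. length p = k \<and> excursion p} \<times> {s. length s = n - k})"
  then show "es \<in> Xk n k" using k by (auto simp: Xk_def)
qed

lemma K11: "K_coeff a 1 1 k = (\<Sum>es\<in>{es. length es = k \<and> excursion es}. path_prob a es)"
  unfolding K_coeff_def by simp

lemma sum_Xk: "k \<le> n \<Longrightarrow> (\<Sum>es\<in>Xk n k. path_prob a es) = K_coeff a 1 1 k"
proof -
  assume k: "k \<le> n"
  have inj: "inj_on (\<lambda>(p, s). p @ s) ({p::bool list. length p = k \<and> excursion p} \<times> {s. length s = n - k})"
    by (auto simp: inj_on_def)
  have "(\<Sum>es\<in>Xk n k. path_prob a es) = (\<Sum>x\<in>{p. length p = k \<and> excursion p} \<times> {s. length s = n - k}. path_prob a ((\<lambda>(p, s). p @ s) x))"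
    unfolding Xk_image[OF k] by (subst sum.reindex[OF inj]) simp
  also have "\<dots> = (\<Sum>p\<in>{p. length p = k \<and> excursion p}. \<Sum>s\<in>{s. length s = n - k}. path_prob a (p @ s))"
    by (simp add: sum.cartesian_product split_def)
  also have "\<dots> = K_coeff a 1 1 k" unfolding K11 by (simp add: path_prob_ext)
  finally show ?thesis .
qed

lemma Xk_disjoint: "k < k' \<Longrightarrow> k' \<le> n \<Longrightarrow> Xk n k \<inter> Xk n k' = {}"
proof (rule ccontr)
  assume kk: "k < k'" and kn: "k' \<le> n" and "Xk n k \<inter> Xk n k' \<noteq> {}"
  then obtain es where e1: "excursion (take k es)" and e2: "excursion (take k' es)" and ln: "length es = n"
    by (auto simp: Xk_def)
  have k1: "1 \<le> k" using e1 unfolding excursion_def by auto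
  have kl: "k \<le> length es" using kk kn ln by simp
  have "pos (take k' es) k = pos (take k es) k" using kk by (simp add: pos_take)
  also have "\<dots> = 0" using e1 kl unfolding excursion_def by (simp add: min_def split: if_splits)
  finally have "pos (take k' es) k = 0" .
  moreover have "k < length (take k' es)" using kk kn ln by simp
  ultimately show False using e2 k1 unfolding excursion_def by auto
qed

lemma sum_union_Xk:
  assumes "I \<subseteq> {..n}"
  shows "(\<Sum>k\<in>I. K_coeff a 1 1 k) = (\<Sum>es\<in>(\<Union>k\<in>I. Xk n k). path_prob a es)"
proof -
  have fin: "finite I" using assms finite_subset by blast
  have "(\<Sum>es\<in>(\<Union>k\<in>I. Xk n k). path_prob a es) = (\<Sum>k\<in>I. \<Sum>es\<in>Xk n k. path_prob a es)"
  proof (rule sum.UNION_disjoint)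
    show "finite I" by (rule fin)
    show "\<forall>k\<in>I. finite (Xk n k)" unfolding Xk_def by (auto intro: finite_len)
    show "\<forall>k\<in>I. \<forall>k'\<in>I. k \<noteq> k' \<longrightarrow> Xk n k \<inter> Xk n k' = {}"
      using Xk_disjoint assms by (metis atMost_iff inf_commute linorder_neqE_nat subsetD)
  qed
  also have "\<dots> = (\<Sum>k\<in>I. K_coeff a 1 1 k)" using assms by (intro sum.cong refl sum_Xk) auto
  finally show ?thesis by simp
qed

lemma K11_nonneg: "0 \<le> a \<Longrightarrow> a \<le> 1 \<Longrightarrow> 0 \<le> K_coeff a 1 1 k"
  unfolding K11 by (intro sum_nonneg path_prob_nonneg) auto

lemma K11_partial_le1:
  assumes "0 \<le> a" "a \<le> 1"
  shows "(\<Sum>k\<le>n. K_coeff a 1 1 k) \<le> 1"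
proof -
  have "(\<Sum>k\<le>n. K_coeff a 1 1 k) = (\<Sum>es\<in>(\<Union>k\<le>n. Xk n k). path_prob a es)"
    by (rule sum_union_Xk) auto
  also have "\<dots> \<le> (\<Sum>es\<in>{es. length es = n}. path_prob a es)"
    by (rule sum_mono2) (auto simp: Xk_def finite_len[where P="\<lambda>_. True", simplified] path_prob_nonneg assms)
  also have "\<dots> = 1" by (rule path_prob_total)
  finally show ?thesis .
qed



lemma K11_summable:
  assumes "0 \<le> a" "a \<le> 1" shows "summable (K_coeff a 1 1)"
proof (rule summableI_nonneg_bounded)
  show "0 \<le> K_coeff a 1 1 n" for n using K11_nonneg assms by blast
  fix n
  have "(\<Sum>i<n. K_coeff a 1 1 i) \<le> (\<Sum>i\<le>n. K_coeff a 1 1 i)"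
    by (rule sum_mono2) (auto simp: K11_nonneg assms)
  also have "\<dots> \<le> 1" by (rule K11_partial_le1[OF assms])
  finally show "(\<Sum>i<n. K_coeff a 1 1 i) \<le> 1" .
qed

lemma beta11: "beta_fps a 1 1 = 1 + fps_X^2 * fps_const (2 * a - 1)"
  unfolding beta_fps_def by (rule fps_ext) (simp add: fps_X_power_mult_nth power2_eq_square algebra_simps)

lemma x11: "x_fps a 1 1 = fps_const (a^2) * fps_X^2"
  unfolding x_fps_def tau_fps_def by simp

lemma quad11_generic:
  fixes A K X :: "'a::comm_ring_1"
  assumes "(1 - A)^2 * K^2 - (1 - A) * (2 - (1 + X^2 * (2 * A - 1))) * K
     + 1 - (1 + X^2 * (2 * A - 1)) + A^2 * X^2 = 0"
  shows "(1 - A)^2 * (K * K) - (1 - A) * K + (1 - A) * (2 * A - 1) * (X^2 * K) + (1 - A)^2 * X^2 = 0"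
proof -
  have "(1 - A)^2 * (K * K) - (1 - A) * K + (1 - A) * (2 * A - 1) * (X^2 * K) + (1 - A)^2 * X^2
     = (1 - A)^2 * K^2 - (1 - A) * (2 - (1 + X^2 * (2 * A - 1))) * K
     + 1 - (1 + X^2 * (2 * A - 1)) + A^2 * X^2"
    by (simp add: algebra_simps power2_eq_square)
  then show ?thesis using assms by simp
qed

lemma fc_two: "fps_const (2::real) = 2" by (simp add: numeral_fps_const)

lemma quad11_fps:
  "fps_const ((1 - a)^2) * (K_fps a 1 1 * K_fps a 1 1) - fps_const (1 - a) * K_fps a 1 1
   + fps_const ((1 - a) * (2 * a - 1)) * (fps_X^2 * K_fps a 1 1) + fps_const ((1 - a)^2) * fps_X^2 = 0"
proof -
  have q: "(1 - fps_const a)^2 * (K_fps a 1 1)^2 - (1 - fps_const a) * (2 - (1 + fps_X^2 * (2 * fps_const a - 1))) * K_fps a 1 1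
     + 1 - (1 + fps_X^2 * (2 * fps_const a - 1)) + fps_const a^2 * fps_X^2 = 0"
    using K_fps_quad[of a 1 1] unfolding beta11 x11 by (simp only: fc_mult fc_diff fc_pow fc_one fc_two)
  show ?thesis using quad11_generic[OF q] by (simp only: fc_mult fc_diff fc_pow fc_one fc_two)
qed

lemma quad11:
  "(1 - a)^2 * (\<Sum>i\<le>n. K_coeff a 1 1 i * K_coeff a 1 1 (n - i)) - (1 - a) * K_coeff a 1 1 n
   + (1 - a) * (2 * a - 1) * (if n < 2 then 0 else K_coeff a 1 1 (n - 2))
   + (1 - a)^2 * (if n = 2 then 1 else 0) = 0"
proof -
  have "fps_nth (fps_const ((1 - a)^2) * (K_fps a 1 1 * K_fps a 1 1) - fps_const (1 - a) * K_fps a 1 1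
   + fps_const ((1 - a) * (2 * a - 1)) * (fps_X^2 * K_fps a 1 1) + fps_const ((1 - a)^2) * fps_X^2) n = 0"
    unfolding quad11_fps by simp
  then show ?thesis
    apply (simp only: fps_add_nth fps_sub_nth fps_mult_left_const_nth fps_X_power_mult_nth fps_X_power_nth)
    apply (simp only: fps_mult_nth K_fps_def fps_nth_Abs_fps atLeast0AtMost)
    done
qed

lemma K11_sum1:
  assumes "0 < a" "a < 1" shows "K_coeff a 1 1 sums 1"
proof -
  define e where "e = K_coeff a 1 1"
  have en: "\<And>k. 0 \<le> e k" unfolding e_def using K11_nonneg assms by auto
  have se: "summable e" unfolding e_def using K11_summable assms by auto
  define S where "S = suminf e"
  have eS: "e sums S" using se unfolding S_def by (rule summable_sums)
  have nse: "summable (\<lambda>k. norm (e k))" using se en by simp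
  have g: "(\<lambda>n. \<Sum>i\<le>n. e i * e (n - i)) sums (S * S)"
    using Cauchy_product_sums[OF nse nse] unfolding S_def .
  define h where "h = (\<lambda>n. if n < 2 then 0 else e (n - 2))"
  have "(\<lambda>i. h (i + 2)) sums S" unfolding h_def using eS by simp
  then have hS: "h sums S" using sums_iff_shift[of h 2 S] by (simp add: h_def)
  have d: "(\<lambda>n. if n = 2 then 1 else 0) sums (1::real)" using sums_single[of 2 "\<lambda>_. 1::real"] by simp
  have all: "(\<lambda>n. (1 - a)^2 * (\<Sum>i\<le>n. e i * e (n - i)) - (1 - a) * e n + (1 - a) * (2 * a - 1) * h n
      + (1 - a)^2 * (if n = 2 then 1 else 0))
     sums ((1 - a)^2 * (S * S) - (1 - a) * S + (1 - a) * (2 * a - 1) * S + (1 - a)^2 * 1)"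
    by (intro sums_add sums_diff sums_mult g eS hS d)
  moreover have "(\<lambda>n. (1 - a)^2 * (\<Sum>i\<le>n. e i * e (n - i)) - (1 - a) * e n + (1 - a) * (2 * a - 1) * h n
      + (1 - a)^2 * (if n = 2 then 1 else 0)) = (\<lambda>n. 0)"
    unfolding e_def h_def using quad11 by (intro ext) blast
  ultimately have "(\<lambda>n. 0::real) sums ((1 - a)^2 * (S * S) - (1 - a) * S + (1 - a) * (2 * a - 1) * S + (1 - a)^2 * 1)"
    by simp
  then have "(1 - a)^2 * (S * S) - (1 - a) * S + (1 - a) * (2 * a - 1) * S + (1 - a)^2 * 1 = 0"
    using sums_unique2 sums_zero by blast
  then have "(1 - a)^2 * (S - 1)^2 = 0" by (simp add: algebra_simps power2_eq_square)
  then have "S = 1" using assms by simp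
  then show ?thesis using eS unfolding e_def by simp
qed



definition BN :: "real \<Rightarrow> nat \<Rightarrow> nat \<Rightarrow> real" where
  "BN a N n = (\<Sum>es\<in>{es. length es = n \<and> bounded_upto (int N) es}. path_prob a es)"

lemma bounded_snoc: "bounded_upto N (s @ [b]) \<Longrightarrow> bounded_upto N s"
  unfolding bounded_upto_def
proof (intro allI impI)
  fix j assume h: "\<forall>j. 1 \<le> j \<and> j \<le> length (s @ [b]) \<and> (\<forall>i. 1 \<le> i \<and> i < j \<longrightarrow> pos (s @ [b]) i \<noteq> 0) \<longrightarrow> \<bar>pos (s @ [b]) j\<bar> \<le> N"
    and j: "1 \<le> j \<and> j \<le> length s \<and> (\<forall>i. 1 \<le> i \<and> i < j \<longrightarrow> pos s i \<noteq> 0)"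
  have "\<forall>i. 1 \<le> i \<and> i < j \<longrightarrow> pos (s @ [b]) i \<noteq> 0" using j by (simp add: pos_append_le)
  then have "\<bar>pos (s @ [b]) j\<bar> \<le> N" using h j by simp
  then show "\<bar>pos s j\<bar> \<le> N" using j by (simp add: pos_append_le)
qed

lemma BN_nonneg: "0 \<le> a \<Longrightarrow> a \<le> 1 \<Longrightarrow> 0 \<le> BN a N n"
  unfolding BN_def by (intro sum_nonneg path_prob_nonneg) auto

lemma BN_le1: assumes "0 \<le> a" "a \<le> 1" shows "BN a N n \<le> 1"
proof -
  have "BN a N n \<le> (\<Sum>es\<in>{es. length es = n}. path_prob a es)"
    unfolding BN_def by (rule sum_mono2) (auto simp: finite_len[where P="\<lambda>_. True", simplified] path_prob_nonneg assms)
  then show ?thesis using path_prob_total by simp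
qed

lemma BN_dec: assumes "0 \<le> a" "a \<le> 1" shows "BN a N (Suc n) \<le> BN a N n"
proof -
  let ?P = "bounded_upto (int N)"
  have inj: "inj_on (\<lambda>(s, b). s @ [b]) A" for A :: "(bool list \<times> bool) set" by (auto simp: inj_on_def)
  have fin: "finite ({s. length s = n \<and> ?P s} \<times> (UNIV :: bool set))" by (auto intro: finite_len)
  have "BN a N (Suc n) = (\<Sum>p\<in>{(s, b). length s = n \<and> ?P (s @ [b])}. path_prob a ((\<lambda>(s, b). s @ [b]) p))"
    unfolding BN_def len_Suc_image[of n ?P] by (subst sum.reindex[OF inj]) simp
  also have "\<dots> \<le> (\<Sum>p\<in>{s. length s = n \<and> ?P s} \<times> (UNIV :: bool set). path_prob a ((\<lambda>(s, b). s @ [b]) p))"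
    by (rule sum_mono2[OF fin]) (auto intro: bounded_snoc path_prob_nonneg assms)
  also have "\<dots> = (\<Sum>s\<in>{s. length s = n \<and> ?P s}. \<Sum>b\<in>UNIV. path_prob a (s @ [b]))"
    by (simp add: sum.cartesian_product split_def)
  also have "\<dots> = BN a N n" unfolding BN_def
    by (intro sum.cong refl) (simp add: UNIV_bool, metis add.commute path_prob_snoc_sum)
  finally show ?thesis .
qed

lemma BN_lower:
  assumes "N \<le> n" "0 \<le> a" "a \<le> 1"
  shows "(\<Sum>k\<le>N. K_coeff a 1 1 k) \<le> BN a N n"
proof -
  have "(\<Sum>k\<le>N. K_coeff a 1 1 k) = (\<Sum>es\<in>(\<Union>k\<le>N. Xk n k). path_prob a es)"
    by (rule sum_union_Xk) (use assms in auto)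
  also have "\<dots> \<le> BN a N n" unfolding BN_def
  proof (rule sum_mono2)
    show "finite {es. length es = n \<and> bounded_upto (int N) es}" by (rule finite_len)
    show "0 \<le> path_prob a es" for es by (rule path_prob_nonneg[OF assms(2,3)])
    show "(\<Union>k\<le>N. Xk n k) \<subseteq> {es. length es = n \<and> bounded_upto (int N) es}"
    proof
      fix es assume "es \<in> (\<Union>k\<le>N. Xk n k)"
      then obtain k where k: "k \<le> N" and es: "length es = n" "excursion (take k es)" by (auto simp: Xk_def)
      have k1: "1 \<le> k" using es(2) unfolding excursion_def by auto
      have lt: "length (take k es) = k" using k assms(1) es(1) by simp
      have z: "pos es k = 0" using es(2) lt unfolding excursion_def by (simp add: pos_take)
      have "bounded_upto (int N) es" unfolding bounded_upto_def
      proof (intro allI impI)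
        fix j assume j: "1 \<le> j \<and> j \<le> length es \<and> (\<forall>i. 1 \<le> i \<and> i < j \<longrightarrow> pos es i \<noteq> 0)"
        have "\<not> k < j" using j z k1 by blast
        then have "j \<le> N" using k by simp
        then show "\<bar>pos es j\<bar> \<le> int N" using abs_pos_le[of es j] by simp
      qed
      then show "es \<in> {es. length es = n \<and> bounded_upto (int N) es}" using es by simp
    qed
  qed
  finally show ?thesis .
qed

lemma prob_H_bounds:
  assumes "0 \<le> a" "a \<le> 1"
  shows "(\<Sum>k\<le>N. K_coeff a 1 1 k) \<le> prob_H_le a N \<and> prob_H_le a N \<le> 1"
proof -
  have dec: "decseq (BN a N)" using BN_dec[OF assms] by (simp add: decseq_Suc_iff)
  obtain L where L: "BN a N \<longlonglongrightarrow> L" "\<forall>i. L \<le> BN a N i"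
    using decseq_convergent[OF dec, of 0] BN_nonneg[OF assms] by blast
  have pl: "prob_H_le a N = L" unfolding prob_H_le_def using limI[OF L(1)] by (simp add: BN_def[abs_def])
  have "L \<le> 1" using L(2) BN_le1[OF assms] order_trans by blast
  moreover have "(\<Sum>k\<le>N. K_coeff a 1 1 k) \<le> L"
    by (rule LIMSEQ_le_const[OF L(1)]) (use BN_lower assms in blast)
  ultimately show ?thesis using pl by simp
qed

lemma prob_H_tendsto1:
  assumes "0 < a" "a < 1"
  shows "prob_H_le a \<longlonglongrightarrow> 1"
proof (rule tendsto_sandwich)
  have "(\<lambda>n. \<Sum>k<n. K_coeff a 1 1 k) \<longlonglongrightarrow> 1" using K11_sum1[OF assms] by (simp add: sums_def)
  then have "(\<lambda>n. \<Sum>k<Suc n. K_coeff a 1 1 k) \<longlonglongrightarrow> 1" by (rule LIMSEQ_Suc)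
  then show "(\<lambda>n. \<Sum>k\<le>n. K_coeff a 1 1 k) \<longlonglongrightarrow> 1" by (simp add: lessThan_Suc_atMost)
  show "(\<lambda>n. 1::real) \<longlonglongrightarrow> 1" by simp
  show "\<forall>\<^sub>F n in sequentially. (\<Sum>k\<le>n. K_coeff a 1 1 k) \<le> prob_H_le a n"
    using prob_H_bounds assms by simp
  show "\<forall>\<^sub>F n in sequentially. prob_H_le a n \<le> 1"
    using prob_H_bounds assms by simp
qed

lemma height_le: "length es = n \<Longrightarrow> excursion es \<Longrightarrow> height es \<le> int n"
proof -
  assume l: "length es = n" and e: "excursion es"
  have n1: "1 \<le> n" using e l by (simp add: excursion_def)
  show ?thesis unfolding height_def l
  proof (subst Max_le_iff)
    show "finite ((\<lambda>j. \<bar>pos es j\<bar>) ` {1..n})" by simp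
    show "(\<lambda>j. \<bar>pos es j\<bar>) ` {1..n} \<noteq> {}" using n1 by simp
    show "\<forall>a\<in>(\<lambda>j. \<bar>pos es j\<bar>) ` {1..n}. a \<le> int n"
    proof
      fix x assume "x \<in> (\<lambda>j. \<bar>pos es j\<bar>) ` {1..n}"
      then obtain j where "j \<le> n" "x = \<bar>pos es j\<bar>" by auto
      then show "x \<le> int n" using abs_pos_le[of es j] by linarith
    qed
  qed
qed

lemma part2:
  assumes "0 < a" "a < 1"
  shows "(\<lambda>N. cond_coeff a r y N n) \<longlonglongrightarrow> fps_nth (K_fps a r y) n"
proof -
  have "(\<lambda>N. K_coeff a r y n / prob_H_le a N) \<longlonglongrightarrow> K_coeff a r y n / 1"
    by (intro tendsto_divide tendsto_const prob_H_tendsto1 assms) simp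
  moreover have "\<forall>\<^sub>F N in sequentially. K_coeff a r y n / prob_H_le a N = cond_coeff a r y N n"
  proof (rule eventually_sequentiallyI[of n])
    fix N assume N: "n \<le> N"
    have "{es. length es = n \<and> excursion es \<and> height es \<le> int N} = {es. length es = n \<and> excursion es}"
    proof -
      have "\<And>es. length es = n \<Longrightarrow> excursion es \<Longrightarrow> height es \<le> int N"
        using height_le N by (meson order_trans of_nat_le_iff)
      then show ?thesis by auto
    qed
    then show "K_coeff a r y n / prob_H_le a N = cond_coeff a r y N n"
      unfolding cond_coeff_def K_coeff_def by simp
  qed
  ultimately show ?thesis unfolding K_fps_def by (auto intro: Lim_transform_eventually)
qed

theorem corollary3:
  fixes a r y :: real
  assumes "0 < a" and "a < 1"
  shows "K_fps a r y = fps_const (1 / (1 - a)) *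
           (1 - fps_const (1/2) * beta_fps a r y - fps_const (1/2) * alpha_fps a r y)
         \<and> (\<forall>n. (\<lambda>N. cond_coeff a r y N n) \<longlonglongrightarrow> fps_nth (K_fps a r y) n)"
  using part1[OF assms(2)] part2[OF assms] by blast

end
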